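(* Let $d \geq 1$ and let $X \subset S^{\mathbb{Z}^d}$ be a countable subshift. Then there is no sequence $(x^i)_{i \in \mathbb{N}}$ of points of $X$ with $x^i \succ x^{i-1}$ for all $i \geq 1$.
   Context: A $d$-dimensional subshift is a closed subset of $S^{\mathbb{Z}^d}$ ($S$ finite, product topology) invariant under all coordinate shifts. For configurations $x,y$, $x \succcurlyeq y$ means every finite pattern occurring in $y$ also occurs in $x$ (the subpattern preorder); $x \approx y$ means $x \succcurlyeq y$ and $y \succcurlyeq x$; $x \succ y$ means $x \succcurlyeq y$ and $x \not\approx y$. *)

theory Defs
  imports "HOL-Analysis.Analysis"
begin

text \<open>Lattice Z^d is modelled as functions 'd \<Rightarrow> int for a finite (nonempty) index
type 'd, so d = CARD('d) \<ge> 1. The alphabet S is a finite type 'a.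
Configurations are maps from Z^d to S.\<close>

type_synonym ('d, 'a) config = "('d \<Rightarrow> int) \<Rightarrow> 'a"

definition shift :: "('d \<Rightarrow> int) \<Rightarrow> ('d, 'a) config \<Rightarrow> ('d, 'a) config" where
  "shift v x = (\<lambda>p. x (\<lambda>i. p i + v i))"

definition config_topology :: "('d, 'a) config topology" where
  "config_topology = product_topology (\<lambda>_. discrete_topology UNIV) UNIV"

definition subshift :: "('d::finite, 'a::finite) config set \<Rightarrow> bool" where
  "subshift X \<longleftrightarrow> closedin config_topology X \<and> (\<forall>v. \<forall>x\<in>X. shift v x \<in> X)"

text \<open>A finite pattern is a finite domain D \<subseteq> Z^d with a labelling f; it occurs in x
if some translate of it agrees with x.\<close>
definition occurs_in :: "('d \<Rightarrow> int) set \<Rightarrow> ('d, 'a) config \<Rightarrow> ('d, 'a) config \<Rightarrow> bool" where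
  "occurs_in D f x \<longleftrightarrow> (\<exists>v. \<forall>p\<in>D. x (\<lambda>i. p i + v i) = f p)"

definition subpat_ge :: "('d, 'a) config \<Rightarrow> ('d, 'a) config \<Rightarrow> bool" (infix "\<succeq>\<^sub>p" 50) where
  "x \<succeq>\<^sub>p y \<longleftrightarrow> (\<forall>D f. finite D \<longrightarrow> occurs_in D f y \<longrightarrow> occurs_in D f x)"

definition subpat_equiv :: "('d, 'a) config \<Rightarrow> ('d, 'a) config \<Rightarrow> bool" (infix "\<approx>\<^sub>p" 50) where
  "x \<approx>\<^sub>p y \<longleftrightarrow> x \<succeq>\<^sub>p y \<and> y \<succeq>\<^sub>p x"

definition subpat_gt :: "('d, 'a) config \<Rightarrow> ('d, 'a) config \<Rightarrow> bool" (infix "\<succ>\<^sub>p" 50) where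
  "x \<succ>\<^sub>p y \<longleftrightarrow> x \<succeq>\<^sub>p y \<and> \<not> x \<approx>\<^sub>p y"

end

theory Submission
  imports Defs
begin

lemma occurs_shift1: "occurs_in D f (shift v x) \<Longrightarrow> occurs_in D f x"
proof -
  assume "occurs_in D f (shift v x)"
  then obtain u where u: "\<forall>p\<in>D. x (\<lambda>i. p i + u i + v i) = f p" by (auto simp: occurs_in_def shift_def)
  show ?thesis unfolding occurs_in_def
    by (rule exI[where x="\<lambda>i. u i + v i"]) (use u in \<open>simp add: add.assoc\<close>)
qed

lemma occurs_shift2: "occurs_in D f x \<Longrightarrow> occurs_in D f (shift v x)"
proof -
  assume "occurs_in D f x"
  then obtain u where u: "\<forall>p\<in>D. x (\<lambda>i. p i + u i) = f p" by (auto simp: occurs_in_def)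
  show ?thesis unfolding occurs_in_def shift_def
    by (rule exI[where x="\<lambda>i. u i - v i"]) (simp add: u)
qed

lemma ge_shift1: "x \<succeq>\<^sub>p shift v x" by (auto simp: subpat_ge_def occurs_shift1)
lemma ge_shift2: "shift v x \<succeq>\<^sub>p x" by (auto simp: subpat_ge_def occurs_shift2)
lemma ge_trans: "x \<succeq>\<^sub>p y \<Longrightarrow> y \<succeq>\<^sub>p z \<Longrightarrow> x \<succeq>\<^sub>p z" by (auto simp: subpat_ge_def)
lemma ge_refl: "x \<succeq>\<^sub>p x" by (auto simp: subpat_ge_def)

lemma gt_shift: "y \<succ>\<^sub>p z \<Longrightarrow> y \<succ>\<^sub>p shift v z"
  unfolding subpat_gt_def subpat_equiv_def
  by (meson ge_shift1 ge_shift2 ge_trans)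

lemma topspace_config: "topspace config_topology = UNIV"
  by (simp add: config_topology_def)

lemma openin_config:
  assumes "openin config_topology U" "w \<in> U"
  shows "\<exists>D. finite D \<and> (\<forall>y. (\<forall>p\<in>D. y p = w p) \<longrightarrow> y \<in> U)"
proof -
  from assms obtain V where V: "finite {i. V i \<noteq> UNIV}" "w \<in> Pi\<^sub>E UNIV V" "Pi\<^sub>E UNIV V \<subseteq> U"
    unfolding config_topology_def openin_product_topology_alt by auto
  show ?thesis
  proof (intro exI conjI allI impI)
    fix y assume "\<forall>p\<in>{i. V i \<noteq> UNIV}. y p = w p"
    then have "y \<in> Pi\<^sub>E UNIV V" using V(2) by (auto simp: PiE_iff) (metis UNIV_I)
    then show "y \<in> U" using V(3) by blast
  qed (use V in auto)
qed

theorem proposition13: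
  fixes X :: "('d::finite, 'a::finite) config set"
  assumes "subshift X" and "countable X"
  shows "\<not> (\<exists>xs :: nat \<Rightarrow> ('d, 'a) config.
            (\<forall>i. xs i \<in> X) \<and> (\<forall>i\<ge>1. xs i \<succ>\<^sub>p xs (i - 1)))"
proof
  assume "\<exists>xs :: nat \<Rightarrow> ('d, 'a) config.
            (\<forall>i. xs i \<in> X) \<and> (\<forall>i\<ge>1. xs i \<succ>\<^sub>p xs (i - 1))"
  then obtain xs :: "nat \<Rightarrow> ('d, 'a) config" where xs: "\<forall>i. xs i \<in> X" "\<forall>i\<ge>1. xs i \<succ>\<^sub>p xs (i - 1)"
    by blast
  let ?T = "config_topology :: ('d, 'a) config topology"
  define A where "A = {z. \<exists>ys. ys 0 = z \<and> (\<forall>i. ys i \<in> X) \<and> (\<forall>i. ys (Suc i) \<succ>\<^sub>p ys i)}"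
  have cl: "closedin ?T X" and sh: "\<And>v x. x \<in> X \<Longrightarrow> shift v x \<in> X"
    using assms(1) by (auto simp: subshift_def)
  have AX: "A \<subseteq> X" unfolding A_def by auto
  have x0A: "xs 0 \<in> A" unfolding A_def
  proof -
    have "\<forall>i. xs (Suc i) \<succ>\<^sub>p xs i"
    proof
      fix i
      have "Suc i \<ge> 1" by simp
      then have "xs (Suc i) \<succ>\<^sub>p xs (Suc i - 1)" using xs(2) by blast
      then show "xs (Suc i) \<succ>\<^sub>p xs i" by simp
    qed
    then show "xs 0 \<in> {z. \<exists>ys. ys 0 = z \<and> (\<forall>i. ys i \<in> X) \<and> (\<forall>i. ys (Suc i) \<succ>\<^sub>p ys i)}"
      using xs(1) by blast
  qed
  have Ashift: "shift v z \<in> A" if "z \<in> A" for v z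
  proof -
    from that obtain ys where ys: "ys 0 = z" "\<forall>i. ys i \<in> X" "\<forall>i. ys (Suc i) \<succ>\<^sub>p ys i"
      unfolding A_def by blast
    define ys' where "ys' = ys(0 := shift v z)"
    have "ys' 0 = shift v z" by (simp add: ys'_def)
    moreover have "\<forall>i. ys' i \<in> X" using ys sh by (auto simp: ys'_def)
    moreover have "\<forall>i. ys' (Suc i) \<succ>\<^sub>p ys' i"
    proof
      fix i show "ys' (Suc i) \<succ>\<^sub>p ys' i"
        proof (cases i)
        case 0 then show ?thesis proof -
          have "ys (Suc 0) \<succ>\<^sub>p ys 0" using ys(3) by blast
          then have "ys (Suc 0) \<succ>\<^sub>p shift v (ys 0)" by (rule gt_shift)
          then have "ys (Suc 0) \<succ>\<^sub>p shift v z" by (simp only: ys(1))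
          then show ?thesis using 0 by (simp add: ys'_def)
        qed
      next
        case (Suc j) then show ?thesis using ys by (simp add: ys'_def)
      qed
    qed
    ultimately show ?thesis unfolding A_def by blast
  qed
  have Anext: "\<exists>z'\<in>A. z' \<succ>\<^sub>p z" if "z \<in> A" for z
  proof -
    from that obtain ys where ys: "ys 0 = z" "\<forall>i. ys i \<in> X" "\<forall>i. ys (Suc i) \<succ>\<^sub>p ys i"
      unfolding A_def by blast
    have "ys 1 \<in> A" unfolding A_def using ys by (intro CollectI exI[where x="\<lambda>i. ys (Suc i)"]) auto
    moreover have "ys (Suc 0) \<succ>\<^sub>p ys 0" using ys(3) by blast
    ultimately show ?thesis using ys(1) by auto
  qed
  have Ader: "A \<subseteq> ?T derived_set_of A"
  proof
    fix w assume wA: "w \<in> A"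
    then obtain z where zA: "z \<in> A" and zw: "z \<succ>\<^sub>p w" using Anext by blast
    show "w \<in> ?T derived_set_of A"
      unfolding in_derived_set_of topspace_config
    proof (intro conjI allI impI UNIV_I)
      fix U assume "w \<in> U \<and> openin ?T U"
      then obtain D where D: "finite D" "\<And>y. (\<forall>p\<in>D. y p = w p) \<Longrightarrow> y \<in> U"
        using openin_config by blast
      have "occurs_in D w w" by (auto simp: occurs_in_def intro: exI[where x="\<lambda>_. 0"])
      then have "occurs_in D w z" using zw D(1) unfolding subpat_gt_def subpat_ge_def by blast
      then obtain v where v: "\<forall>p\<in>D. z (\<lambda>i. p i + v i) = w p" by (auto simp: occurs_in_def)
      have "shift v z \<in> U" using v by (intro D(2)) (simp add: shift_def)
      moreover have "shift v z \<in> A" using Ashift zA by blast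
      moreover have "shift v z \<noteq> w"
      proof
        assume "shift v z = w"
        then have "w \<succeq>\<^sub>p z" using ge_shift2[of v z] by simp
        then show False using zw unfolding subpat_gt_def subpat_equiv_def by blast
      qed
      ultimately show "\<exists>y. y \<noteq> w \<and> y \<in> A \<and> y \<in> U" by blast
    qed
  qed
  define Y where "Y = ?T closure_of A"
  have YX: "Y \<subseteq> X" unfolding Y_def by (rule closure_of_minimal[OF AX cl])
  have cY: "countable Y" using countable_subset[OF YX assms(2)] .
  have AY: "A \<subseteq> Y" unfolding Y_def by (rule closure_of_subset) (simp add: topspace_config)
  have "closedin ?T Y" unfolding Y_def by (rule closedin_closure_of)
  then have "?T derived_set_of Y \<subseteq> Y" by (simp add: closedin_contains_derived_set)
  moreover have "Y \<subseteq> ?T derived_set_of Y"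
  proof -
    have "Y = A \<union> ?T derived_set_of A" unfolding Y_def closure_of_alt topspace_config by simp
    also have "\<dots> \<subseteq> ?T derived_set_of A" using Ader by blast
    also have "\<dots> \<subseteq> ?T derived_set_of Y" using AY by (rule derived_set_of_mono)
    finally show ?thesis .
  qed
  ultimately have eq: "?T derived_set_of Y = Y" by blast
  have cs: "compact_space ?T"
    unfolding config_topology_def
    by (simp add: compact_space_product_topology compact_space_discrete_topology)
  have hs: "Hausdorff_space ?T"
    unfolding config_topology_def
    by (simp add: Hausdorff_space_product_topology)
  have "Y \<noteq> {}" using x0A AY by blast
  then have "(UNIV::real set) \<lesssim> Y"
    using lepoll_perfect_set[OF disjI2[OF conjI[OF compact_imp_locally_compact_space[OF cs] hs]] eq] by blast
  then have "countable (UNIV::real set)" using cY countable_lepoll by blast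
  then show False using uncountable_UNIV_real by blast
qed

end
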